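(* Let $M\subseteq[r]^d$ be a dot array satisfying (P2') and (P3). If $\mathbf x,\mathbf y\in M$ and $i\ne j$ are indices with $x_i>y_i$ and $x_j=y_j$, then there exists $\mathbf b\in M$ with $b_i=y_i$ and $b_j>y_j$.
   Context: $[r]=\{0,\dots,r\}$ and a dot array is a subset of $[r]^d$; for an element $\mathbf w$, $w_i$ (or $w_{k,i}$ for $\mathbf w_k$) denotes its $i$-th coordinate. (P2') for any distinct $i,j\in\{1,\dots,d\}$ and all integers $r_i,r_j\ge0$ with $r_i+r_j=r$, there are $\mathbf z,\mathbf w_1,\dots,\mathbf w_{r_i},\mathbf u_1,\dots,\mathbf u_{r_j}\in M$ with: (a) $w_{1,i}<\dots<w_{r_i,i}<z_i$; (b) $u_{1,j}<\dots<u_{r_j,j}<z_j$; (c) $u_{k,j}<w_{k',j}$ for all $k,k'$. (P3) every set $S$ of $r+2$ elements of $M$ contains a subset $S'$ (with at least two elements) such that for every $1\le i\le d$ the value $\min\{x_i:\mathbf x\in S'\}$ is attained by at least two elements of $S'$. *)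

theory Defs
  imports Main
begin

text \<open>Points of [r]^d are modelled as functions nat \<Rightarrow> nat, coordinates indexed
by 1..d, with value 0 outside 1..d (so that they are determined by their coordinates).\<close>

definition grid :: "nat \<Rightarrow> nat \<Rightarrow> (nat \<Rightarrow> nat) set" where
  "grid r d = {x. (\<forall>i\<in>{1..d}. x i \<le> r) \<and> (\<forall>i. i \<notin> {1..d} \<longrightarrow> x i = 0)}"

definition dot_array :: "nat \<Rightarrow> nat \<Rightarrow> (nat \<Rightarrow> nat) set \<Rightarrow> bool" where
  "dot_array r d M \<longleftrightarrow> M \<subseteq> grid r d"

definition P2' :: "nat \<Rightarrow> nat \<Rightarrow> (nat \<Rightarrow> nat) set \<Rightarrow> bool" where
  "P2' r d M \<longleftrightarrow>
    (\<forall>i\<in>{1..d}. \<forall>j\<in>{1..d}. i \<noteq> j \<longrightarrow> (\<forall>ri rj. ri + rj = r \<longrightarrow>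
      (\<exists>z w u. z \<in> M \<and> (\<forall>k\<in>{1..ri}. w k \<in> M) \<and> (\<forall>k\<in>{1..rj}. u k \<in> M) \<and>
        (\<forall>k\<in>{1..ri}. \<forall>k'\<in>{1..ri}. k < k' \<longrightarrow> w k i < w k' i) \<and>
        (\<forall>k\<in>{1..ri}. w k i < z i) \<and>
        (\<forall>k\<in>{1..rj}. \<forall>k'\<in>{1..rj}. k < k' \<longrightarrow> u k j < u k' j) \<and>
        (\<forall>k\<in>{1..rj}. u k j < z j) \<and>
        (\<forall>k\<in>{1..rj}. \<forall>k'\<in>{1..ri}. u k j < w k' j))))"

definition P3 :: "nat \<Rightarrow> nat \<Rightarrow> (nat \<Rightarrow> nat) set \<Rightarrow> bool" where
  "P3 r d M \<longleftrightarrow>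
    (\<forall>S. S \<subseteq> M \<and> finite S \<and> card S = r + 2 \<longrightarrow>
      (\<exists>S'. S' \<subseteq> S \<and> card S' \<ge> 2 \<and>
        (\<forall>i\<in>{1..d}. \<exists>a\<in>S'. \<exists>b\<in>S'. a \<noteq> b \<and>
            a i = Min ((\<lambda>x. x i) ` S') \<and> b i = Min ((\<lambda>x. x i) ` S'))))"

end

theory Submission
  imports Defs
begin

lemma inc_ge:
  fixes f :: "nat \<Rightarrow> nat"
  assumes "\<forall>k\<in>{1..n}. \<forall>k'\<in>{1..n}. k < k' \<longrightarrow> f k < f k'"
  shows "k \<in> {1..n} \<Longrightarrow> k - 1 \<le> f k"
proof (induction k)
  case 0
  then show ?case by simp
next
  case (Suc k)
  show ?case
  proof (cases "k = 0")
    case True then show ?thesis by simp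
  next
    case False
    then have "k \<in> {1..n}" using Suc.prems by auto
    then have "k - 1 \<le> f k" using Suc.IH by blast
    moreover have "f k < f (Suc k)" using assms Suc.prems \<open>k \<in> {1..n}\<close> by auto
    ultimately show ?thesis by simp
  qed
qed

lemma inc_le:
  fixes f :: "nat \<Rightarrow> nat"
  assumes "\<forall>k\<in>{1..n}. \<forall>k'\<in>{1..n}. k < k' \<longrightarrow> f k < f k'"
    and "k \<in> {1..n}"
  shows "f k + (n - k) \<le> f n"
proof -
  have "k \<le> n" using assms(2) by simp
  then show ?thesis
  proof (induction k rule: inc_induct)
    case base
    then show ?case by simp
  next
    case (step m)
    have "1 \<le> m" using assms(2) step.hyps by simp
    then have "f m < f (Suc m)" using assms(1) step.hyps by auto
    moreover have "n - m = Suc (n - Suc m)" using step.hyps by simp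
    ultimately show ?case using step.IH by simp
  qed
qed

theorem mainTheorem12:
  fixes r d :: nat and M :: "(nat \<Rightarrow> nat) set" and x y :: "nat \<Rightarrow> nat" and i j :: nat
  assumes "dot_array r d M" and "P2' r d M" and "P3 r d M"
    and "x \<in> M" and "y \<in> M"
    and "i \<in> {1..d}" and "j \<in> {1..d}" and "i \<noteq> j"
    and "x i > y i" and "x j = y j"
  shows "\<exists>b\<in>M. b i = y i \<and> b j > y j"
proof (rule ccontr)
  assume NB: "\<not> (\<exists>b\<in>M. b i = y i \<and> b j > y j)"
  define c where "c = y j"
  have bnd: "\<And>p. p \<in> M \<Longrightarrow> p j \<le> r"
    using assms(1) assms(7) unfolding dot_array_def grid_def by blast
  have cr: "c \<le> r" using bnd assms(5) c_def by simp
  have P2: "\<And>ri rj. ri + rj = r \<Longrightarrow> (\<exists>z w u. z \<in> M \<and> (\<forall>k\<in>{1..ri}. w k \<in> M) \<and> (\<forall>k\<in>{1..rj}. u k \<in> M) \<and>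
        (\<forall>k\<in>{1..ri}. \<forall>k'\<in>{1..ri}. k < k' \<longrightarrow> w k i < w k' i) \<and>
        (\<forall>k\<in>{1..ri}. w k i < z i) \<and>
        (\<forall>k\<in>{1..rj}. \<forall>k'\<in>{1..rj}. k < k' \<longrightarrow> u k j < u k' j) \<and>
        (\<forall>k\<in>{1..rj}. u k j < z j) \<and>
        (\<forall>k\<in>{1..rj}. \<forall>k'\<in>{1..ri}. u k j < w k' j))"
    using assms(2,6,7,8) unfolding P2'_def by blast
  obtain z0 w0 u0 where z0: "z0 \<in> M" and u0M: "\<forall>k\<in>{1..r}. u0 k \<in> M"
    and u0inc: "\<forall>k\<in>{1..r}. \<forall>k'\<in>{1..r}. k < k' \<longrightarrow> u0 k j < u0 k' j"
    and u0z: "\<forall>k\<in>{1..r}. u0 k j < z0 j"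
    using P2[of 0 r] by auto
  have uval: "\<forall>k\<in>{1..r}. u0 k j = k - 1"
  proof
    fix k assume k: "k \<in> {1..r}"
    have g: "k - 1 \<le> u0 k j" using inc_ge[of r "\<lambda>k. u0 k j"] u0inc k by blast
    have "u0 k j + (r - k) \<le> u0 r j" using inc_le[of r "\<lambda>k. u0 k j" k] u0inc k by blast
    moreover have "u0 r j < z0 j" using u0z k by auto
    moreover have "z0 j \<le> r" using bnd z0 by blast
    ultimately show "u0 k j = k - 1" using g k by auto
  qed
  define Q where "Q = u0 ` {1..c}"
  have QM: "Q \<subseteq> M" using u0M cr Q_def by auto
  have Qj: "\<forall>q\<in>Q. q j < c" using uval cr Q_def by auto
  have Qinj: "\<forall>p\<in>Q. \<forall>q\<in>Q. p j = q j \<longrightarrow> p = q"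
  proof (intro ballI impI)
    fix p q assume "p \<in> Q" "q \<in> Q" "p j = q j"
    then obtain a b where "a \<in> {1..c}" "b \<in> {1..c}" "p = u0 a" "q = u0 b" using Q_def by blast
    moreover have "a - 1 = b - 1" using calculation \<open>p j = q j\<close> uval cr by auto
    ultimately have "a = b" by auto
    then show "p = q" using \<open>p = u0 a\<close> \<open>q = u0 b\<close> by simp
  qed
  have "inj_on u0 {1..c}"
  proof (rule inj_onI)
    fix a b assume "a \<in> {1..c}" "b \<in> {1..c}" "u0 a = u0 b"
    then have "u0 a j = u0 b j" by simp
    then have "a - 1 = b - 1" using \<open>a \<in> {1..c}\<close> \<open>b \<in> {1..c}\<close> uval cr by auto
    then show "a = b" using \<open>a \<in> {1..c}\<close> \<open>b \<in> {1..c}\<close> by auto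
  qed
  then have cardQ: "card Q = c" using Q_def card_image by fastforce
  have finQ: "finite Q" using Q_def by simp
  obtain V where VM: "V \<subseteq> M" and finV: "finite V" and cardV: "card V = r - c"
    and Vj: "\<forall>v\<in>V. v j > c" and Vinj: "\<forall>p\<in>V. \<forall>q\<in>V. p i = q i \<longrightarrow> p = q"
  proof (cases "c = r")
    case True
    then show ?thesis using that[of "{}"] by simp
  next
    case False
    then have "(r - c - 1) + (c + 1) = r" using cr by simp
    from P2[OF this] obtain z w u where z: "z \<in> M" and wM: "\<forall>k\<in>{1..r-c-1}. w k \<in> M"
      and winc: "\<forall>k\<in>{1..r-c-1}. \<forall>k'\<in>{1..r-c-1}. k < k' \<longrightarrow> w k i < w k' i"
      and wz: "\<forall>k\<in>{1..r-c-1}. w k i < z i"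
      and uinc: "\<forall>k\<in>{1..c+1}. \<forall>k'\<in>{1..c+1}. k < k' \<longrightarrow> u k j < u k' j"
      and uz: "\<forall>k\<in>{1..c+1}. u k j < z j"
      and uw: "\<forall>k\<in>{1..c+1}. \<forall>k'\<in>{1..r-c-1}. u k j < w k' j"
      by (elim exE conjE) assumption
    have uc: "c \<le> u (c+1) j" using inc_ge[of "c+1" "\<lambda>k. u k j" "c+1"] uinc by simp
    define V where "V = insert z (w ` {1..r-c-1})"
    have h1: "V \<subseteq> M" using V_def z wM by auto
    have h2: "finite V" using V_def by simp
    have winj: "inj_on w {1..r-c-1}"
    proof (rule inj_onI)
      fix a b assume ab: "a \<in> {1..r-c-1}" "b \<in> {1..r-c-1}" "w a = w b"
      show "a = b"
      proof (rule ccontr)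
        assume "a \<noteq> b"
        then have "a < b \<or> b < a" by auto
        then show False
        proof
          assume "a < b"
          then have "w a i < w b i" using winc ab(1,2) by blast
          then show False using ab(3) by simp
        next
          assume "b < a"
          then have "w b i < w a i" using winc ab(1,2) by blast
          then show False using ab(3) by simp
        qed
      qed
    qed
    have "z \<notin> w ` {1..r-c-1}"
    proof
      assume "z \<in> w ` {1..r-c-1}"
      then obtain k where "k \<in> {1..r-c-1}" "z = w k" by blast
      then show False using wz by fastforce
    qed
    then have h3: "card V = r - c" using V_def card_image[OF winj] False cr by simp
    have h4: "\<forall>v\<in>V. v j > c"
    proof
      fix v assume "v \<in> V"
      have c1: "c + 1 \<in> {1..c+1}" by simp
      show "v j > c"
      proof (cases "v = z")
        case True
        then show ?thesis using uz c1 uc by fastforce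
      next
        case False
        then obtain k where "k \<in> {1..r-c-1}" "v = w k" using \<open>v \<in> V\<close> V_def by auto
        then show ?thesis using uw c1 uc by fastforce
      qed
    qed
    have h5: "\<forall>p\<in>V. \<forall>q\<in>V. p i = q i \<longrightarrow> p = q"
    proof (intro ballI impI)
      fix p q assume pq: "p \<in> V" "q \<in> V" "p i = q i"
      show "p = q"
      proof (cases "p = z \<or> q = z")
        case True
        then show ?thesis using pq wz V_def by force
      next
        case False
        then obtain a b where ab: "a \<in> {1..r-c-1}" "b \<in> {1..r-c-1}" "p = w a" "q = w b"
          using pq V_def by auto
        have "a = b"
        proof (rule ccontr)
          assume "a \<noteq> b"
          then have "a < b \<or> b < a" by auto
          then show False
          proof
            assume "a < b"
            then have "w a i < w b i" using winc ab(1,2) by blast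
            then show False using ab(3,4) pq(3) by simp
          next
            assume "b < a"
            then have "w b i < w a i" using winc ab(1,2) by blast
            then show False using ab(3,4) pq(3) by simp
          qed
        qed
        then show ?thesis using ab by simp
      qed
    qed
    show ?thesis by (rule that[OF h1 h2 h3 h4 h5])
  qed
  define S where "S = insert x (insert y (Q \<union> V))"
  have xy: "x \<noteq> y" using assms(9) by auto
  have xnot: "x \<notin> Q \<union> V"
  proof
    assume "x \<in> Q \<union> V"
    then show False using Qj Vj assms(10) c_def by (metis UnE less_irrefl)
  qed
  have ynot: "y \<notin> Q \<union> V"
  proof
    assume "y \<in> Q \<union> V"
    then show False using Qj Vj c_def by (metis UnE less_irrefl)
  qed
  have QV: "Q \<inter> V = {}"
  proof (rule ccontr)
    assume "Q \<inter> V \<noteq> {}"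
    then obtain v where "v \<in> Q" "v \<in> V" by blast
    then show False using Qj Vj by (metis less_asym)
  qed
  have "card (Q \<union> V) = r" using card_Un_disjoint[OF finQ finV QV] cardQ cardV cr by simp
  then have cardS: "card S = r + 2" using S_def xy xnot ynot finQ finV by simp
  have SM: "S \<subseteq> M" using S_def QM VM assms(4,5) by auto
  have finS: "finite S" using S_def finQ finV by simp
  obtain S' where S'S: "S' \<subseteq> S" and cS': "card S' \<ge> 2"
    and good: "\<forall>k\<in>{1..d}. \<exists>a\<in>S'. \<exists>b\<in>S'. a \<noteq> b \<and>
            a k = Min ((\<lambda>x. x k) ` S') \<and> b k = Min ((\<lambda>x. x k) ` S')"
  proof -
    have "S \<subseteq> M \<and> finite S \<and> card S = r + 2" using SM finS cardS by simp
    then have "\<exists>S'. S' \<subseteq> S \<and> card S' \<ge> 2 \<and>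
        (\<forall>k\<in>{1..d}. \<exists>a\<in>S'. \<exists>b\<in>S'. a \<noteq> b \<and>
            a k = Min ((\<lambda>x. x k) ` S') \<and> b k = Min ((\<lambda>x. x k) ` S'))"
      using assms(3) unfolding P3_def by blast
    then show ?thesis using that by (elim exE conjE) assumption
  qed
  have finS': "finite S'" using S'S finS finite_subset by blast
  have gk: "\<exists>p\<in>S'. \<exists>q\<in>S'. p \<noteq> q \<and> p k = q k \<and> (\<forall>s\<in>S'. p k \<le> s k)" if "k \<in> {1..d}" for k
  proof -
    have "\<exists>a\<in>S'. \<exists>b\<in>S'. a \<noteq> b \<and>
            a k = Min ((\<lambda>x. x k) ` S') \<and> b k = Min ((\<lambda>x. x k) ` S')"
      using good that by (rule bspec)
    then obtain p q where pq: "p \<in> S'" "q \<in> S'" "p \<noteq> q" "p k = Min ((\<lambda>x. x k) ` S')" "q k = Min ((\<lambda>x. x k) ` S')"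
      by blast
    have "\<forall>s\<in>S'. Min ((\<lambda>x. x k) ` S') \<le> s k" using finS' by simp
    then have "\<forall>s\<in>S'. p k \<le> s k" using pq(4) by simp
    moreover have "p k = q k" using pq(4,5) by simp
    ultimately show ?thesis using pq(1,2,3) by blast
  qed
  obtain p q where pq: "p \<in> S'" "q \<in> S'" "p \<noteq> q" "p j = q j" and pmin: "\<forall>s\<in>S'. p j \<le> s j"
    using gk[OF assms(7)] by (elim bexE conjE) assumption
  obtain p' q' where pq': "p' \<in> S'" "q' \<in> S'" "p' \<noteq> q'" "p' i = q' i" and pmin': "\<forall>s\<in>S'. p' i \<le> s i"
    using gk[OF assms(6)] by (elim bexE conjE) assumption
  have cls: "(s \<in> Q \<and> s j < c) \<or> (s \<in> V \<and> c < s j) \<or> (s = x \<and> s j = c) \<or> (s = y \<and> s j = c)"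
    if "s \<in> S'" for s
  proof -
    have "s \<in> S" using that S'S by blast
    then have "s = x \<or> s = y \<or> s \<in> Q \<or> s \<in> V" unfolding S_def by blast
    then show ?thesis using Qj Vj assms(10) c_def by auto
  qed
  have "p \<notin> Q"
  proof
    assume "p \<in> Q"
    then have "q j < c" using Qj pq(4) by auto
    then have "q \<in> Q" using cls[OF pq(2)] by auto
    then show False using \<open>p \<in> Q\<close> pq Qinj by blast
  qed
  have allV: False if "p \<in> V"
  proof -
    have "c < p j" using that Vj by blast
    have "\<forall>s\<in>S'. s \<in> V"
    proof
      fix s assume "s \<in> S'"
      then have "c < s j" using pmin \<open>c < p j\<close> by fastforce
      then show "s \<in> V" using cls[OF \<open>s \<in> S'\<close>] by auto
    qed
    then show False using pq' Vinj by blast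
  qed
  have pc: "p = x \<or> p = y" "p j = c" using cls[OF pq(1)] \<open>p \<notin> Q\<close> allV by auto
  have "q j = c" using pc pq(4) by simp
  then have "q = x \<or> q = y" using cls[OF pq(2)] by auto
  then have xS': "x \<in> S'" and yS': "y \<in> S'" using pc pq by auto
  have allj: "\<forall>s\<in>S'. c \<le> s j" using pmin pc by simp
  have "p' i \<le> y i" using pmin' yS' by blast
  then have "p' i < x i" "q' i < x i" using assms(9) pq' by auto
  then have A: "p' = y \<or> (p' \<in> V \<and> c < p' j)" "q' = y \<or> (q' \<in> V \<and> c < q' j)"
    using cls[OF pq'(1)] cls[OF pq'(2)] allj pq'(1,2) by fastforce+
  have B: "\<And>v. v \<in> V \<Longrightarrow> c < v j \<Longrightarrow> v i \<noteq> y i" using NB VM c_def by blast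
  show False
    using A B pq' Vinj by metis
qed

end
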